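(* Let $(\mathbf{a}_1,\mathbf{a}_2,\mathbf{a}_3)$ be a weakly generic triple, fix $j\in\{0,\dots,f-1\}$, and let $s\in S_3$ be the permutation with $a_{s(1),f-j-1}>a_{s(2),f-j-1}>a_{s(3),f-j-1}$. Let $R$ be an $\mathcal{O}$-algebra and $I\in\mathcal{I}(R)$. Then $$\mathrm{Ad}\big(v^{a_{s(1),f-j-1}},v^{a_{s(2),f-j-1}},v^{a_{s(3),f-j-1}}\big)\big(\varphi(I)^{-1}\big)\in\mathcal{D}_3(R).$$
   Context: $p>3$ prime, $\mathcal{O}$ the ring of integers of a finite extension of $\mathbb{Q}_p$. $\mathbf{a}_k=(a_{k,j})_{j=0}^{f-1}$ ($k=1,2,3$) are $f$-tuples of integers in $[0,p-1]$; the triple is weakly generic if $3\le|a_{1,j}-a_{2,j}|,|a_{2,j}-a_{3,j}|,|a_{1,j}-a_{3,j}|\le p-4$ for all $j$. $\mathcal{I}(R)$ is the set of $M\in\mathrm{GL}_3(R[[v]])$ that are upper triangular modulo $v$; $\mathcal{D}_3(R)$ is the set of $M\in\mathrm{GL}_3(R[[v]])$ that are diagonal modulo $v^3$. $\varphi$ is applied entrywise, where $\varphi:R[[v]]\to R[[v]]$ is the $R$-linear ring endomorphism with $v\mapsto v^p$. $\mathrm{Ad}(v^{b_1},v^{b_2},v^{b_3})(M)=\mathrm{diag}(v^{b_1},v^{b_2},v^{b_3})M\,\mathrm{diag}(v^{-b_1},v^{-b_2},v^{-b_3})$. *)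

theory Defs
  imports "HOL-Analysis.Analysis" "HOL-Computational_Algebra.Formal_Laurent_Series"
          "HOL-Library.Numeral_Type"
begin

type_synonym 'a mat3 = "('a fps, 3) vec ^ 3"

text \<open>3x3 matrices over R[[v]] are modelled as ('r fps)^3^3, indices 0 < 1 < 2 of type 3
  standing for 1, 2, 3.\<close>

definition weakly_generic :: "nat \<Rightarrow> nat \<Rightarrow> (nat \<Rightarrow> nat \<Rightarrow> nat) \<Rightarrow> bool" where
  "weakly_generic p f a \<longleftrightarrow>
     (\<forall>k\<in>{1,2,3}. \<forall>j<f. a k j \<le> p - 1) \<and>
     (\<forall>j<f. \<forall>k\<in>{1,2,3}. \<forall>l\<in>{1,2,3}. k \<noteq> l \<longrightarrow>
        3 \<le> \<bar>int (a k j) - int (a l j)\<bar> \<and> \<bar>int (a k j) - int (a l j)\<bar> \<le> int p - 4)"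

definition fps_frob :: "nat \<Rightarrow> 'a::comm_ring_1 fps \<Rightarrow> 'a fps" where
  "fps_frob p g = Abs_fps (\<lambda>n. if p dvd n then fps_nth g (n div p) else 0)"

definition mat_frob :: "nat \<Rightarrow> 'a::comm_ring_1 mat3 \<Rightarrow> 'a mat3" where
  "mat_frob p M = (\<chi> i k. fps_frob p (M $ i $ k))"

definition iwahori :: "('a::comm_ring_1 mat3) set" where
  "iwahori = {M. invertible M \<and> (\<forall>i k. k < i \<longrightarrow> fps_nth (M $ i $ k) 0 = 0)}"

definition D3 :: "('a::comm_ring_1 mat3) set" where
  "D3 = {M. invertible M \<and> (\<forall>i k. i \<noteq> k \<longrightarrow> (\<forall>n<3. fps_nth (M $ i $ k) n = 0))}"

definition Ad_v :: "(3 \<Rightarrow> int) \<Rightarrow> 'a::comm_ring_1 mat3 \<Rightarrow> ('a fls, 3) vec ^ 3" where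
  "Ad_v b M = (\<chi> i k. fls_X_intpow (b i - b k) * fps_to_fls (M $ i $ k))"

definition mat_to_fls :: "'a::comm_ring_1 mat3 \<Rightarrow> ('a fls, 3) vec ^ 3" where
  "mat_to_fls M = (\<chi> i k. fps_to_fls (M $ i $ k))"

definition idx3 :: "3 \<Rightarrow> nat" where
  "idx3 i = (if i = 0 then 1 else if i = 1 then 2 else 3)"

end

theory Submission
  imports Defs
begin
lemma a2: "(0::3) < 1" unfolding less_bit1_def by (simp add: bit1.Rep_0 bit1.Rep_1)
lemma a3: "(1::3) < 2" unfolding less_bit1_def by (simp add: bit1.Rep_1 bit1.Rep_numeral)
lemma a4: "(0::3) < 2" unfolding less_bit1_def by (simp add: bit1.Rep_0 bit1.Rep_numeral)
lemma ex3: "(i::3) = 0 \<or> i = 1 \<or> i = 2" using exhaust_3[of i] by auto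
lemma sum3: "sum g (UNIV::3 set) = g 0 + g 1 + g 2"
proof -
  have "sum g (UNIV::3 set) = g 1 + g 2 + g 3" by (rule sum_3)
  also have "(3::3) = 0" by simp
  finally show ?thesis by (simp add: ac_simps)
qed
lemma lt3: "(k::3) < i \<longleftrightarrow> (i = 1 \<and> k = 0) \<or> (i = 2 \<and> k = 0) \<or> (i = 2 \<and> k = 1)"
proof -
  have n: "\<not> (1::3) < 0" "\<not> (2::3) < 1" "\<not> (2::3) < 0" using a2 a3 a4 by (auto dest: less_asym)
  have d: "(1::3) \<noteq> 0" "(2::3) \<noteq> 1" "(2::3) \<noteq> 0" using a2 a3 a4 by auto
  show ?thesis using ex3[of i] ex3[of k] a2 a3 a4 n d by (elim disjE) auto
qed
lemma fps_frob_nth: "fps_frob p g $ n = (if p dvd n then g $ (n div p) else 0)"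
  by (simp add: fps_frob_def)
lemma fps_frob_add: "fps_frob p (a+b) = fps_frob p a + fps_frob p b"
  by (simp add: fps_eq_iff fps_frob_nth)
lemma fps_frob_0: "fps_frob p 0 = 0"
  by (simp add: fps_eq_iff fps_frob_nth)
lemma fps_frob_1: "p > 0 \<Longrightarrow> fps_frob p 1 = 1"
  by (auto simp add: fps_eq_iff fps_frob_nth elim!: dvdE)
lemma fps_frob_mult:
  assumes p: "p > 0"
  shows "fps_frob p (a*b) = fps_frob p a * fps_frob p b"
proof (rule fps_ext)
  fix n
  show "fps_frob p (a*b) $ n = (fps_frob p a * fps_frob p b) $ n"
  proof (cases "p dvd n")
    case False
    have "\<forall>i\<in>{0..n}. fps_frob p a $ i * fps_frob p b $ (n-i) = 0"
    proof
      fix i assume i: "i \<in> {0..n}"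
      show "fps_frob p a $ i * fps_frob p b $ (n-i) = 0"
      proof (cases "p dvd i \<and> p dvd (n - i)")
        case True
        then have "p dvd (i + (n - i))" by auto
        with i have "p dvd n" by simp
        with False show ?thesis by simp
      qed (auto simp: fps_frob_nth)
    qed
    then show ?thesis using False by (simp add: fps_mult_nth fps_frob_nth)
  next
    case True
    then obtain m where n: "n = p * m" by (auto elim: dvdE)
    define g where "g i = fps_frob p a $ i * fps_frob p b $ (n-i)" for i
    have "(fps_frob p a * fps_frob p b) $ n = sum g {0..n}"
      by (simp add: fps_mult_nth g_def)
    also have "\<dots> = sum g ((\<lambda>k. p*k) ` {0..m})"
    proof (rule sum.mono_neutral_right)
      show "(\<lambda>k. p*k) ` {0..m} \<subseteq> {0..n}" using n by auto
      show "\<forall>i\<in>{0..n} - (\<lambda>k. p*k) ` {0..m}. g i = 0"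
      proof
        fix i assume i: "i \<in> {0..n} - (\<lambda>k. p*k) ` {0..m}"
        show "g i = 0"
        proof (cases "p dvd i")
          case True
          then obtain k where k: "i = p*k" by (auto elim: dvdE)
          with i n p have "k \<le> m" by auto
          with i k show ?thesis by auto
        qed (simp add: g_def fps_frob_nth)
      qed
    qed simp
    also have "\<dots> = sum (g \<circ> (\<lambda>k. p*k)) {0..m}"
      by (rule sum.reindex) (use p in \<open>auto simp: inj_on_def\<close>)
    also have "\<dots> = (\<Sum>k=0..m. a$k * b$(m-k))"
    proof (rule sum.cong)
      fix k assume k: "k \<in> {0..m}"
      have "n - p*k = p*(m-k)" using n by (simp add: diff_mult_distrib2)
      then show "(g \<circ> (\<lambda>k. p*k)) k = a$k * b$(m-k)"
        using p by (simp add: g_def fps_frob_nth)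
    qed simp
    also have "\<dots> = fps_frob p (a*b) $ n"
      using n p by (simp add: fps_frob_nth fps_mult_nth)
    finally show ?thesis by simp
  qed
qed

lemma fps_frob_sum: "fps_frob p (sum g S) = sum (\<lambda>i. fps_frob p (g i)) S"
  by (induct S rule: infinite_finite_induct) (simp_all add: fps_frob_0 fps_frob_add)

lemma mat_frob_mult: "p > 0 \<Longrightarrow> mat_frob p (A ** B) = mat_frob p A ** mat_frob p B"
  by (simp add: mat_frob_def matrix_matrix_mult_def vec_eq_iff fps_frob_sum fps_frob_mult)

lemma mat_frob_one: "p > 0 \<Longrightarrow> mat_frob p (mat 1) = (mat 1 :: 'a::comm_ring_1 mat3)"
  by (simp add: mat_frob_def mat_def vec_eq_iff fps_frob_0 fps_frob_1)

lemma matrix_inv_eq: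
  fixes A B :: "'a::comm_ring_1 ^'n^'n"
  assumes "A ** B = mat 1" "B ** A = mat 1"
  shows "matrix_inv A = B"
proof -
  have "\<exists>X. A ** X = mat 1 \<and> X ** A = mat 1" using assms by blast
  then have X: "A ** matrix_inv A = mat 1 \<and> matrix_inv A ** A = mat 1"
    unfolding matrix_inv_def by (rule someI_ex)
  have "B = B ** (A ** matrix_inv A)" using X by simp
  also have "\<dots> = matrix_inv A" by (simp add: matrix_mul_assoc assms)
  finally show ?thesis by simp
qed

lemma inv_lower:
  fixes I J :: "'r::comm_ring_1 mat3"
  assumes IJ: "I ** J = mat 1" and JI: "J ** I = mat 1"
    and low: "\<forall>i k. k < i \<longrightarrow> I$i$k$0 = 0"
  shows "\<forall>i k. k < i \<longrightarrow> J$i$k$0 = 0"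
proof -
  define u where "u i k = I$i$k$0" for i k
  define w where "w i k = J$i$k$0" for i k
  have UV: "(\<Sum>j\<in>UNIV. u i j * w j k) = (if i = k then 1 else 0)" for i k
  proof -
    have "(I ** J)$i$k $ 0 = (mat 1 :: 'r mat3)$i$k$0" using IJ by simp
    then show ?thesis by (simp add: matrix_matrix_mult_def fps_sum_nth u_def w_def mat_def split: if_splits)
  qed
  have VU: "(\<Sum>j\<in>UNIV. w i j * u j k) = (if i = k then 1 else 0)" for i k
  proof -
    have "(J ** I)$i$k $ 0 = (mat 1 :: 'r mat3)$i$k$0" using JI by simp
    then show ?thesis by (simp add: matrix_matrix_mult_def fps_sum_nth u_def w_def mat_def split: if_splits)
  qed
  have d: "(1::3) \<noteq> 0" "(2::3) \<noteq> 1" "(2::3) \<noteq> 0" using a2 a3 a4 by auto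
  have l: "u 1 0 = 0" "u 2 0 = 0" "u 2 1 = 0" using low lt3 by (auto simp: u_def)
  have e1: "u 2 2 * w 2 0 = 0" using UV[of 2 0] l d by (simp add: sum3)
  have e2: "u 2 2 * w 2 1 = 0" using UV[of 2 1] l d by (simp add: sum3)
  have e3: "u 2 2 * w 2 2 = 1" using UV[of 2 2] l d by (simp add: sum3)
  have f1: "w 0 0 * u 0 0 = 1" using VU[of 0 0] l d by (simp add: sum3)
  have f2: "w 1 0 * u 0 0 = 0" using VU[of 1 0] l d by (simp add: sum3)
  have f3: "w 2 0 * u 0 0 = 0" using VU[of 2 0] l d by (simp add: sum3)
  have "w 1 0 = w 1 0 * (w 0 0 * u 0 0)" using f1 by simp
  also have "\<dots> = 0" using f2 by (metis mult.assoc mult.commute mult_zero_left)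
  finally have g1: "w 1 0 = 0" .
  have "w 2 0 = w 2 0 * (w 0 0 * u 0 0)" using f1 by simp
  also have "\<dots> = 0" using f3 by (metis mult.assoc mult.commute mult_zero_left)
  finally have g2: "w 2 0 = 0" .
  have "w 2 1 = w 2 1 * (u 2 2 * w 2 2)" using e3 by simp
  also have "\<dots> = 0" using e2 by (metis mult.assoc mult.commute mult_zero_left)
  finally have g3: "w 2 1 = 0" .
  show ?thesis using g1 g2 g3 lt3 by (auto simp: w_def)
qed

lemma fps_to_fls_sum: "fps_to_fls (sum g S) = sum (\<lambda>i. fps_to_fls (g i)) S"
  by (induct S rule: infinite_finite_induct) simp_all

lemma Ad_mult:
  fixes A B :: "'a::comm_ring_1 mat3"
  shows "Ad_v b (A ** B) = Ad_v b A ** Ad_v b B"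
proof -
  have "fls_X_intpow (b i - b k) * fps_to_fls (A$i$j * B$j$k)
      = fls_X_intpow (b i - b j) * fps_to_fls (A$i$j) * (fls_X_intpow (b j - b k) * fps_to_fls (B$j$k))"
    for i j k
  proof -
    have "(fls_X_intpow (b i - b k) :: 'a fls) = fls_X_intpow (b i - b j) * fls_X_intpow (b j - b k)"
      unfolding fls_X_intpow_times_fls_X_intpow by simp
    then show ?thesis by (simp add: fls_times_fps_to_fls ac_simps)
  qed
  then show ?thesis
    by (simp add: Ad_v_def matrix_matrix_mult_def vec_eq_iff fps_to_fls_sum sum_distrib_left)
qed

lemma Ad_one: "Ad_v b (mat 1) = (mat 1 :: ('a::comm_ring_1 fls, 3) vec ^ 3)"
  by (simp add: Ad_v_def mat_def vec_eq_iff)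

lemma mat_to_fls_mult: "mat_to_fls (A ** B) = mat_to_fls A ** mat_to_fls B"
  by (simp add: mat_to_fls_def matrix_matrix_mult_def vec_eq_iff fps_to_fls_sum fls_times_fps_to_fls)

lemma mat_to_fls_one: "mat_to_fls (mat 1) = (mat 1 :: ('a::comm_ring_1 fls, 3) vec ^ 3)"
  by (simp add: mat_to_fls_def mat_def vec_eq_iff)

lemma mat_to_fls_inj: "mat_to_fls A = mat_to_fls B \<Longrightarrow> A = B"
  by (simp add: mat_to_fls_def vec_eq_iff)

lemma Ad_nth: "fls_nth (Ad_v b M $ i $ k) m = (if m - (b i - b k) < 0 then 0 else M$i$k $ nat (m - (b i - b k)))"
  by (simp only: Ad_v_def vec_lambda_beta fls_X_intpow_times_conv_shift) (simp add: algebra_simps)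

lemma regpart_mat:
  fixes X :: "('a::comm_ring_1 fls, 3) vec ^ 3"
  assumes "\<forall>i k m. m < 0 \<longrightarrow> fls_nth (X$i$k) m = 0"
  shows "mat_to_fls (\<chi> i k. fls_regpart (X$i$k)) = X"
  using assms by (simp add: mat_to_fls_def vec_eq_iff fls_eq_iff)

lemma frob_Ad_vanish:
  fixes A :: "'a::comm_ring_1 mat3"
  assumes p: "p > 0" and low: "\<forall>i k. k < i \<longrightarrow> A$i$k$0 = 0"
    and up: "\<forall>i k. i < k \<longrightarrow> 3 \<le> b i - b k"
    and lo: "\<forall>i k. k < i \<longrightarrow> b k - b i \<le> int p - 4"
    and cond: "m < 0 \<or> (0 \<le> m \<and> m < 3 \<and> i \<noteq> k)"
  shows "fls_nth (Ad_v b (mat_frob p A) $ i $ k) m = 0"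
proof (cases "m - (b i - b k) < 0")
  case True then show ?thesis by (simp add: Ad_nth)
next
  case False
  define n where "n = nat (m - (b i - b k))"
  have "k < i"
  proof (rule ccontr)
    assume "\<not> k < i"
    then have "i = k \<or> i < k" by auto
    then show False using False cond up[rule_format, of i k] by auto
  qed
  then have "b k - b i \<le> int p - 4" using lo by blast
  then have np: "n < p" using cond False p unfolding n_def by auto
  have "fps_frob p (A$i$k) $ n = 0"
  proof (cases "p dvd n")
    case True
    then have "n = 0" using np by (auto elim!: dvdE)
    then show ?thesis using low \<open>k < i\<close> by (simp add: fps_frob_nth)
  qed (simp add: fps_frob_nth)
  then show ?thesis using False by (simp add: Ad_nth mat_frob_def n_def)
qed

theorem proposition2p16:
  fixes p f j :: nat and a :: "nat \<Rightarrow> nat \<Rightarrow> nat" and s :: "nat \<Rightarrow> nat"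
    and I :: "'r::comm_ring_1 mat3"
  assumes "prime p" and "p > 3"
    and "weakly_generic p f a"
    and "j < f"
    and "s permutes {1,2,3}"
    and "a (s 1) (f - j - 1) > a (s 2) (f - j - 1)"
    and "a (s 2) (f - j - 1) > a (s 3) (f - j - 1)"
    and "I \<in> iwahori"
  shows "\<exists>N \<in> D3. mat_to_fls N =
           Ad_v (\<lambda>i. int (a (s (idx3 i)) (f - j - 1))) (matrix_inv (mat_frob p I))"
proof -
  define c where "c = f - j - 1"
  define b where "b = (\<lambda>i::3. int (a (s (idx3 i)) c))"
  have p0: "p > 0" using assms(2) by simp
  have cf: "c < f" using assms(4) by (simp add: c_def)
  have d: "(1::3) \<noteq> 0" "(2::3) \<noteq> 1" "(2::3) \<noteq> 0" using a2 a3 a4 by auto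
  have b0: "b 0 = int (a (s 1) c)" and b1: "b 1 = int (a (s 2) c)" and b2: "b 2 = int (a (s 3) c)"
    using d by (simp_all add: b_def idx3_def)
  have sin: "s 1 \<in> {1,2,3}" "s 2 \<in> {1,2,3}" "s 3 \<in> {1,2,3}"
    using permutes_in_image[OF assms(5)] by auto
  have wg: "\<And>k l. k \<in> {1,2,3} \<Longrightarrow> l \<in> {1,2,3} \<Longrightarrow> k \<noteq> l \<Longrightarrow>
        3 \<le> \<bar>int (a k c) - int (a l c)\<bar> \<and> \<bar>int (a k c) - int (a l c)\<bar> \<le> int p - 4"
    using assms(3) cf unfolding weakly_generic_def by blast
  have o1: "a (s 1) c > a (s 2) c" and o2: "a (s 2) c > a (s 3) c"
    using assms(6,7) by (simp_all add: c_def)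
  have n12: "s 1 \<noteq> s 2" and n23: "s 2 \<noteq> s 3" and n13: "s 1 \<noteq> s 3"
    using o1 o2 by auto
  have w12: "3 \<le> b 0 - b 1 \<and> b 0 - b 1 \<le> int p - 4"
    using wg[OF sin(1) sin(2) n12] o1 unfolding b0 b1 by (auto simp: abs_if split: if_splits)
  have w23: "3 \<le> b 1 - b 2 \<and> b 1 - b 2 \<le> int p - 4"
    using wg[OF sin(2) sin(3) n23] o2 unfolding b1 b2 by (auto simp: abs_if split: if_splits)
  have w13: "3 \<le> b 0 - b 2 \<and> b 0 - b 2 \<le> int p - 4"
    using wg[OF sin(1) sin(3) n13] o1 o2 unfolding b0 b2 by (auto simp: abs_if split: if_splits)
  have up: "\<forall>i k. i < k \<longrightarrow> 3 \<le> b i - b k"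
    using w12 w23 w13 lt3 by auto
  have lo: "\<forall>i k. k < i \<longrightarrow> b k - b i \<le> int p - 4"
    using w12 w23 w13 lt3 by auto
  from assms(8) obtain J where IJ: "I ** J = mat 1" and JI: "J ** I = mat 1"
    and lowI: "\<forall>i k. k < i \<longrightarrow> I$i$k$0 = 0"
    unfolding iwahori_def invertible_def by blast
  have lowJ: "\<forall>i k. k < i \<longrightarrow> J$i$k$0 = 0" by (rule inv_lower[OF IJ JI lowI])
  define M where "M = mat_frob p I"
  define K where "K = mat_frob p J"
  have MK: "M ** K = mat 1" unfolding M_def K_def
    using mat_frob_mult[OF p0, of I J] IJ mat_frob_one[OF p0] by metis
  have KM: "K ** M = mat 1" unfolding M_def K_def
    using mat_frob_mult[OF p0, of J I] JI mat_frob_one[OF p0] by metis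
  have invM: "matrix_inv M = K" by (rule matrix_inv_eq[OF MK KM])
  have vK: "fls_nth (Ad_v b K $ i $ k) m = 0" if "m < 0 \<or> (0 \<le> m \<and> m < 3 \<and> i \<noteq> k)" for i k m
    unfolding K_def by (rule frob_Ad_vanish[OF p0 lowJ up lo that])
  have vM: "fls_nth (Ad_v b M $ i $ k) m = 0" if "m < 0" for i k m
    unfolding M_def by (rule frob_Ad_vanish[OF p0 lowI up lo]) (use that in simp)
  define N where "N = (\<chi> i k. fls_regpart (Ad_v b K $ i $ k))"
  define N' where "N' = (\<chi> i k. fls_regpart (Ad_v b M $ i $ k))"
  have hN: "mat_to_fls N = Ad_v b K" unfolding N_def by (rule regpart_mat) (use vK in auto)
  have hN': "mat_to_fls N' = Ad_v b M" unfolding N'_def by (rule regpart_mat) (use vM in auto)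
  have "mat_to_fls (N ** N') = mat_to_fls (mat 1)"
    by (simp add: mat_to_fls_mult hN hN' Ad_mult[symmetric] KM Ad_one mat_to_fls_one)
  then have NN': "N ** N' = mat 1" by (rule mat_to_fls_inj)
  have "mat_to_fls (N' ** N) = mat_to_fls (mat 1)"
    by (simp add: mat_to_fls_mult hN hN' Ad_mult[symmetric] MK Ad_one mat_to_fls_one)
  then have N'N: "N' ** N = mat 1" by (rule mat_to_fls_inj)
  have "invertible N" unfolding invertible_def using NN' N'N by blast
  moreover have "\<forall>i k. i \<noteq> k \<longrightarrow> (\<forall>n<3. fps_nth (N $ i $ k) n = 0)"
    unfolding N_def using vK by simp
  ultimately have "N \<in> D3" unfolding D3_def by blast
  moreover have "mat_to_fls N = Ad_v (\<lambda>i. int (a (s (idx3 i)) (f - j - 1))) (matrix_inv (mat_frob p I))"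
    using hN invM unfolding M_def b_def c_def by simp
  ultimately show ?thesis by blast
qed
end
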